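(* Let $S$ be an intra-regular semigroup and $A=(\mu_A,\nu_A)$ an IF subset of $S$. Then $A$ is an IF ideal of $S$ if and only if $\underline{A}$ is a semiprime ideal of the semigroup $(\underline{S},\circ)$.
   Context: A semigroup $S$ is intra-regular if for every $x\in S$ there are $a,b\in S$ with $x=ax^2b$. An intuitionistic fuzzy (IF) subset of $S$ is a pair $A=(\mu_A,\nu_A)$ of functions $S\to[0,1]$ with $\mu_A(x)+\nu_A(x)\le1$ for all $x$. $A$ is an IF ideal of $S$ if $\mu_A(xy)\ge\max\{\mu_A(x),\mu_A(y)\}$ and $\nu_A(xy)\le\min\{\nu_A(x),\nu_A(y)\}$ for all $x,y\in S$. For $x\in S$ and $\alpha,\beta\in[0,1]$ with $\alpha+\beta\le1$, the IF point $x_{(\alpha,\beta)}$ is the IF subset of $S$ with value $(\alpha,\beta)$ at $x$ and $(0,1)$ elsewhere (so all points $x_{(0,1)}$ coincide). $\underline{S}$ is the set of all IF points of $S$; it is a semigroup under $x_{(\alpha,\beta)}\circ y_{(\gamma,\delta)}=(xy)_{(\min(\alpha,\gamma),\max(\beta,\delta))}$. For an IF subset $A$, $\underline{A}=\{x_{(\alpha,\beta)}\in\underline{S}:\mu_A(x)\ge\alpha,\ \nu_A(x)\le\beta\}$. In a semigroup $T$, an ideal is a non-empty $I\subseteq T$ with $TI\subseteq I$ and $IT\subseteq I$; here a semiprime ideal of $T$ means an ideal $I$ such that for every $t\in T$, $t^2\in I$ implies $t\in I$. *)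

theory Defs
  imports Main "HOL.Real"
begin

text \<open>Semigroups are modelled by the type class semigroup_mult; the whole type is S.\<close>

definition intra_regular :: "'a::semigroup_mult itself \<Rightarrow> bool" where
  "intra_regular _ \<longleftrightarrow> (\<forall>x::'a. \<exists>a b. x = a * (x * x) * b)"

type_synonym 'a ifs = "('a \<Rightarrow> real) \<times> ('a \<Rightarrow> real)"

definition IF_subset :: "'a ifs \<Rightarrow> bool" where
  "IF_subset A \<longleftrightarrow> (\<forall>x. 0 \<le> fst A x \<and> fst A x \<le> 1 \<and> 0 \<le> snd A x \<and> snd A x \<le> 1
                         \<and> fst A x + snd A x \<le> 1)"

definition IF_ideal :: "'a::semigroup_mult ifs \<Rightarrow> bool" where
  "IF_ideal A \<longleftrightarrow> IF_subset A \<and>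
     (\<forall>x y. fst A (x * y) \<ge> max (fst A x) (fst A y) \<and> snd A (x * y) \<le> min (snd A x) (snd A y))"

definition ifpoint :: "'a \<Rightarrow> real \<Rightarrow> real \<Rightarrow> 'a ifs" where
  "ifpoint x \<alpha> \<beta> = ((\<lambda>y. if y = x then \<alpha> else 0), (\<lambda>y. if y = x then \<beta> else 1))"

definition valid_pair :: "real \<Rightarrow> real \<Rightarrow> bool" where
  "valid_pair \<alpha> \<beta> \<longleftrightarrow> 0 \<le> \<alpha> \<and> \<alpha> \<le> 1 \<and> 0 \<le> \<beta> \<and> \<beta> \<le> 1 \<and> \<alpha> + \<beta> \<le> 1"

definition ifpoints :: "'a ifs set" where
  "ifpoints = {ifpoint x \<alpha> \<beta> | x \<alpha> \<beta>. valid_pair \<alpha> \<beta>}"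

definition ifp_mult :: "'a::semigroup_mult ifs \<Rightarrow> 'a ifs \<Rightarrow> 'a ifs" where
  "ifp_mult P Q = (SOME R. \<exists>x \<alpha> \<beta> y \<gamma> \<delta>. valid_pair \<alpha> \<beta> \<and> valid_pair \<gamma> \<delta> \<and>
       P = ifpoint x \<alpha> \<beta> \<and> Q = ifpoint y \<gamma> \<delta> \<and>
       R = ifpoint (x * y) (min \<alpha> \<gamma>) (max \<beta> \<delta>))"

definition ifs_points :: "'a ifs \<Rightarrow> 'a ifs set" where
  "ifs_points A = {ifpoint x \<alpha> \<beta> | x \<alpha> \<beta>. valid_pair \<alpha> \<beta> \<and> fst A x \<ge> \<alpha> \<and> snd A x \<le> \<beta>}"

definition sg_ideal :: "'b set \<Rightarrow> ('b \<Rightarrow> 'b \<Rightarrow> 'b) \<Rightarrow> 'b set \<Rightarrow> bool" where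
  "sg_ideal T f I \<longleftrightarrow> I \<noteq> {} \<and> I \<subseteq> T \<and> (\<forall>t\<in>T. \<forall>i\<in>I. f t i \<in> I \<and> f i t \<in> I)"

definition semiprime_ideal :: "'b set \<Rightarrow> ('b \<Rightarrow> 'b \<Rightarrow> 'b) \<Rightarrow> 'b set \<Rightarrow> bool" where
  "semiprime_ideal T f I \<longleftrightarrow> sg_ideal T f I \<and> (\<forall>t\<in>T. f t t \<in> I \<longrightarrow> t \<in> I)"

end

theory Submission
  imports Defs
begin

lemma ifpoint_null: "ifpoint x 0 1 = ifpoint y 0 1"
  by (simp add: ifpoint_def)

lemma ifpoint_eq:
  assumes "ifpoint x a b = ifpoint x' a' b'"
  shows "(x = x' \<and> a = a' \<and> b = b') \<or> (a = 0 \<and> b = 1 \<and> a' = 0 \<and> b' = 1)"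
proof -
  have f: "\<And>z. (if z = x then a else 0) = (if z = x' then a' else 0)"
    using arg_cong[OF assms, of "\<lambda>p. fst p z" for z] unfolding ifpoint_def by simp
  have s: "\<And>z. (if z = x then b else 1) = (if z = x' then b' else 1)"
    using arg_cong[OF assms, of "\<lambda>p. snd p z" for z] unfolding ifpoint_def by simp
  show ?thesis
  proof (cases "x = x'")
    case True then show ?thesis using f[of x] s[of x] by simp
  next
    case False then show ?thesis using f[of x] s[of x] f[of x'] s[of x'] by auto
  qed
qed

lemma mem_points:
  assumes "IF_subset A"
  shows "ifpoint x a b \<in> ifs_points A \<longleftrightarrow> valid_pair a b \<and> a \<le> fst A x \<and> snd A x \<le> b"
proof
  assume "ifpoint x a b \<in> ifs_points A"
  then obtain x' a' b' where e: "ifpoint x a b = ifpoint x' a' b'" and v: "valid_pair a' b'"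
    "a' \<le> fst A x'" "snd A x' \<le> b'" unfolding ifs_points_def by blast
  from ifpoint_eq[OF e] show "valid_pair a b \<and> a \<le> fst A x \<and> snd A x \<le> b"
  proof
    assume "x = x' \<and> a = a' \<and> b = b'" then show ?thesis using v by simp
  next
    assume "a = 0 \<and> b = 1 \<and> a' = 0 \<and> b' = 1"
    then show ?thesis using assms unfolding IF_subset_def valid_pair_def by auto
  qed
next
  assume "valid_pair a b \<and> a \<le> fst A x \<and> snd A x \<le> b"
  then show "ifpoint x a b \<in> ifs_points A" unfolding ifs_points_def by blast
qed

lemma mult_points:
  assumes "valid_pair a b" "valid_pair c d"
  shows "ifp_mult (ifpoint x a b) (ifpoint y c d) = ifpoint (x * y) (min a c) (max b d)"
  unfolding ifp_mult_def
proof (rule some_equality)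
  show "\<exists>x' \<alpha> \<beta> y' \<gamma> \<delta>. valid_pair \<alpha> \<beta> \<and> valid_pair \<gamma> \<delta> \<and>
       ifpoint x a b = ifpoint x' \<alpha> \<beta> \<and> ifpoint y c d = ifpoint y' \<gamma> \<delta> \<and>
       ifpoint (x * y) (min a c) (max b d) = ifpoint (x' * y') (min \<alpha> \<gamma>) (max \<beta> \<delta>)"
    using assms by blast
next
  fix R
  assume "\<exists>x' \<alpha> \<beta> y' \<gamma> \<delta>. valid_pair \<alpha> \<beta> \<and> valid_pair \<gamma> \<delta> \<and>
       ifpoint x a b = ifpoint x' \<alpha> \<beta> \<and> ifpoint y c d = ifpoint y' \<gamma> \<delta> \<and>
       R = ifpoint (x' * y') (min \<alpha> \<gamma>) (max \<beta> \<delta>)"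
  then obtain x' \<alpha> \<beta> y' \<gamma> \<delta> where h: "valid_pair \<alpha> \<beta>" "valid_pair \<gamma> \<delta>"
     "ifpoint x a b = ifpoint x' \<alpha> \<beta>" "ifpoint y c d = ifpoint y' \<gamma> \<delta>"
     "R = ifpoint (x' * y') (min \<alpha> \<gamma>) (max \<beta> \<delta>)" by blast
  from ifpoint_eq[OF h(3)] ifpoint_eq[OF h(4)] show "R = ifpoint (x * y) (min a c) (max b d)"
  proof (elim disjE)
    assume "x = x' \<and> a = \<alpha> \<and> b = \<beta>" "y = y' \<and> c = \<gamma> \<and> d = \<delta>"
    then show ?thesis using h(5) by simp
  next
    assume "x = x' \<and> a = \<alpha> \<and> b = \<beta>" "c = 0 \<and> d = 1 \<and> \<gamma> = 0 \<and> \<delta> = 1"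
    then have "min a c = 0" "max b d = 1" "min \<alpha> \<gamma> = 0" "max \<beta> \<delta> = 1"
      using assms h unfolding valid_pair_def by auto
    then show ?thesis using h(5) by (simp add: ifpoint_null[of "x'*y'" "x*y"])
  next
    assume "a = 0 \<and> b = 1 \<and> \<alpha> = 0 \<and> \<beta> = 1"
    then have "min a c = 0" "max b d = 1" "min \<alpha> \<gamma> = 0" "max \<beta> \<delta> = 1"
      using assms h unfolding valid_pair_def by auto
    then show ?thesis using h(5) by (simp add: ifpoint_null[of "x'*y'" "x*y"])
  next
    assume "a = 0 \<and> b = 1 \<and> \<alpha> = 0 \<and> \<beta> = 1"
    then have "min a c = 0" "max b d = 1" "min \<alpha> \<gamma> = 0" "max \<beta> \<delta> = 1"
      using assms h unfolding valid_pair_def by auto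
    then show ?thesis using h(5) by (simp add: ifpoint_null[of "x'*y'" "x*y"])
  qed
qed

theorem theorem3p19:
  fixes A :: "'a::semigroup_mult ifs"
  assumes "intra_regular TYPE('a)"
    and "IF_subset A"
  shows "IF_ideal A \<longleftrightarrow> semiprime_ideal ifpoints ifp_mult (ifs_points A)"
proof
  assume I: "IF_ideal A"
  have m1: "\<And>x y. fst A x \<le> fst A (x*y) \<and> fst A y \<le> fst A (x*y)
              \<and> snd A (x*y) \<le> snd A x \<and> snd A (x*y) \<le> snd A y"
    using I unfolding IF_ideal_def by (metis max.bounded_iff min.bounded_iff)
  have ne: "ifpoint undefined 0 1 \<in> ifs_points A"
    using assms(2) by (simp add: mem_points valid_pair_def IF_subset_def)
  have sub: "ifs_points A \<subseteq> ifpoints" unfolding ifs_points_def ifpoints_def by blast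
  have cl: "\<forall>t\<in>ifpoints. \<forall>i\<in>ifs_points A. ifp_mult t i \<in> ifs_points A \<and> ifp_mult i t \<in> ifs_points A"
  proof (intro ballI)
    fix t i :: "'a ifs" assume t: "t \<in> ifpoints" and i: "i \<in> ifs_points A"
    from t obtain y c d where t': "t = ifpoint y c d" "valid_pair c d" unfolding ifpoints_def by blast
    from i obtain x a b where i': "i = ifpoint x a b" "valid_pair a b" "a \<le> fst A x" "snd A x \<le> b"
      unfolding ifs_points_def by blast
    have v: "valid_pair (min c a) (max d b)" "valid_pair (min a c) (max b d)"
      using t' i' unfolding valid_pair_def by auto
    show "ifp_mult t i \<in> ifs_points A \<and> ifp_mult i t \<in> ifs_points A"
      using t' i' v m1[of y x] m1[of x y]
      by (simp add: mult_points mem_points[OF assms(2)] min_le_iff_disj le_max_iff_disj)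
  qed
  have sp: "\<forall>t\<in>ifpoints. ifp_mult t t \<in> ifs_points A \<longrightarrow> t \<in> ifs_points A"
  proof (intro ballI impI)
    fix t :: "'a ifs" assume t: "t \<in> ifpoints" and tt: "ifp_mult t t \<in> ifs_points A"
    from t obtain x a b where t': "t = ifpoint x a b" "valid_pair a b" unfolding ifpoints_def by blast
    have "ifpoint (x*x) a b \<in> ifs_points A" using tt t' by (simp add: mult_points)
    then have h: "a \<le> fst A (x*x)" "snd A (x*x) \<le> b" by (simp_all add: mem_points[OF assms(2)])
    obtain p q where "x = p * (x*x) * q" using assms(1) unfolding intra_regular_def by blast
    then have "fst A (x*x) \<le> fst A x" "snd A x \<le> snd A (x*x)"
      using m1[of p "x*x"] m1[of "p*(x*x)" q] by auto
    then show "t \<in> ifs_points A" using h t' by (simp add: mem_points[OF assms(2)])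
  qed
  show "semiprime_ideal ifpoints ifp_mult (ifs_points A)"
    unfolding semiprime_ideal_def sg_ideal_def using ne sub cl sp by blast
next
  assume S: "semiprime_ideal ifpoints ifp_mult (ifs_points A)"
  then have cl: "\<And>t i. t \<in> ifpoints \<Longrightarrow> i \<in> ifs_points A \<Longrightarrow>
      ifp_mult t i \<in> ifs_points A \<and> ifp_mult i t \<in> ifs_points A"
    unfolding semiprime_ideal_def sg_ideal_def by blast
  have vA: "\<And>x. valid_pair (fst A x) (snd A x)" using assms(2)
    unfolding IF_subset_def valid_pair_def by blast
  have v10: "valid_pair 1 0" by (simp add: valid_pair_def)
  have key: "\<And>x y. fst A x \<le> fst A (y*x) \<and> snd A (y*x) \<le> snd A x
                 \<and> fst A x \<le> fst A (x*y) \<and> snd A (x*y) \<le> snd A x"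
  proof -
    fix x y :: 'a
    have i: "ifpoint x (fst A x) (snd A x) \<in> ifs_points A"
      using vA by (simp add: mem_points[OF assms(2)])
    have t: "ifpoint y 1 0 \<in> ifpoints" unfolding ifpoints_def using v10 by blast
    have le: "fst A x \<le> 1" "0 \<le> snd A x" using vA[of x] unfolding valid_pair_def by auto
    from cl[OF t i] show "?thesis x y"
      using le vA[of x] v10
      by (simp add: mult_points mem_points[OF assms(2)] min_def max_def)
  qed
  show "IF_ideal A" unfolding IF_ideal_def using assms(2) key by auto
qed

end
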